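(* Let $(\mathcal{Y}_i)_{i\in[K]}$ be any family of pairwise disjoint measurable subsets of $\mathcal{Y}$ with $P_Y(\mathcal{Y}_i)>0$ for every $i$, and put $\tilde{\mathcal{Y}}=\bigcup_{i=1}^K\mathcal{Y}_i$. Let $f^*_{\mathcal{X}}:\mathcal{X}\to\mathbb{R}^d$, $f^*_{\mathcal{Y}}:\mathcal{Y}\to\mathbb{R}^d$ and $\tau^*>0$ satisfy, for some constant $\Gamma\in\mathbb{R}$, $$g^*(x,y):=\frac{1}{\tau^*}f^*_{\mathcal{X}}(x)^\top f^*_{\mathcal{Y}}(y)=\ln\frac{p(x,y)}{p(x)p(y)}+\Gamma$$ for every $x\in\operatorname{supp}p_X$ and every $y\in\tilde{\mathcal{Y}}$. Let $\bar h^{g^*}(x)=\bar W^\top f^*_{\mathcal{X}}(x)+\bar b$ with $\bar W=[\bar w_1,\dots,\bar w_K]$, $\bar w_i=\mathbb{E}_{y\sim p_Y(\cdot\mid\mathcal{Y}_i)}[\tfrac{1}{\tau^*}f^*_{\mathcal{Y}}(y)]$ and $\bar b=(\ln P_Y(\mathcal{Y}_1),\dots,\ln P_Y(\mathcal{Y}_K))^\top$. Then $$\mathcal{L}_{\sup}(\bar h^{g^*})-\mathcal{L}_{\sup}(h^* )\le \mathbb{E}_{x\sim p_X}\Big[\mathrm{KL}\big(P_C(\cdot\mid x)\,\big\|\,P_C(\cdot\mid x;(\mathcal{Y}_i)_{i\in[K]})\big)\Big]+\mathbb{E}_{(x,c)\sim p(x,c)}\Big[\mathrm{KL}\big(p_Y(\cdot\mid\mathcal{Y}_c)\,\big\|\,p_Y(\cdot\mid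 x,\mathcal{Y}_c)\big)\Big].$$
   Context: $\mathcal{X},\mathcal{Y}$ are input spaces; $(X,Y)$ has joint density $p(x,y)=p_{X,Y}(x,y)$ with marginal densities $p(x)=p_X(x)$, $p(y)=p_Y(y)$ and conditional density $p(y\mid x)$. For $\mathcal{Y}'\subseteq\mathcal{Y}$, $P_Y(\mathcal{Y}')=\int_{\mathcal{Y}'}p(y)\,dy$ and $P_Y(\mathcal{Y}'\mid x)=\int_{\mathcal{Y}'}p(y\mid x)\,dy$. $[K]=\{1,\dots,K\}$. Labels: $C\in[K]$ with conditional probability $P_C(c\mid x)$, and $p(x,c)=P_C(c\mid x)p_X(x)$. For $h:\mathcal{X}\to\mathbb{R}^K$, $\mathcal{L}_{\sup}(h)=\mathbb{E}_{(x,c)\sim p(x,c)}\big[-\ln\frac{\exp h(x)_c}{\sum_{i=1}^K\exp h(x)_i}\big]$, and $h^*$ denotes a minimizer of $\mathcal{L}_{\sup}$ over all measurable $h$ (e.g. $h^*(x)_i=\ln P_C(i\mid x)$), so $\mathcal{L}_{\sup}(h^* )=\mathbb{E}_{p(x)}[H(P_C(\cdot\mid x))]$. Definitions: $p_Y(y\mid\mathcal{Y}_i)=p(y)/P_Y(\mathcal{Y}_i)$ if $y\in\mathcal{Y}_i$ and $0$ otherwise; $p_Y(y\mid x,\mathcal{Y}_i)=p(y\mid x)/P_Y(\mathcal{Y}_i\mid x)$ if $y\in\mathcal{Y}_i$ and $0$ otherwise; $P_C(c\mid x;(\mathcal{Y}_i)_{i\in[K]})=P_Y(\mathcal{Y}_c\mid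 x)/P_Y(\tilde{\mathcal{Y}}\mid x)$, a probability distribution on $[K]$. All expectations and KL divergences are assumed to be well defined and finite (in particular $P_Y(\mathcal{Y}_i\mid x)>0$ for $x\in\operatorname{supp}p_X$). *)

theory Defs
  imports "HOL-Analysis.Analysis"
begin

text \<open>Setting: the input spaces are measure spaces MX, MY (reference measures, e.g.
Lebesgue); p :: 'x => 'y => real is the joint density of (X,Y) w.r.t. MX (x) MY.
Labels range over [K] = {1..K}; PC x c is P_C(c | x).  Vectors in R^K are
functions nat => real read on {1..K}.\<close>

definition margX :: "'x measure \<Rightarrow> 'y measure \<Rightarrow> ('x \<Rightarrow> 'y \<Rightarrow> real) \<Rightarrow> 'x \<Rightarrow> real" where
  "margX MX MY p x = (\<integral>y. p x y \<partial>MY)"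

definition margY :: "'x measure \<Rightarrow> 'y measure \<Rightarrow> ('x \<Rightarrow> 'y \<Rightarrow> real) \<Rightarrow> 'y \<Rightarrow> real" where
  "margY MX MY p y = (\<integral>x. p x y \<partial>MX)"

definition condY :: "'x measure \<Rightarrow> 'y measure \<Rightarrow> ('x \<Rightarrow> 'y \<Rightarrow> real) \<Rightarrow> 'x \<Rightarrow> 'y \<Rightarrow> real" where
  "condY MX MY p x y = p x y / margX MX MY p x"

definition probY :: "'x measure \<Rightarrow> 'y measure \<Rightarrow> ('x \<Rightarrow> 'y \<Rightarrow> real) \<Rightarrow> 'y set \<Rightarrow> real" where
  "probY MX MY p A = set_lebesgue_integral MY A (margY MX MY p)"

definition probY_cond :: "'x measure \<Rightarrow> 'y measure \<Rightarrow> ('x \<Rightarrow> 'y \<Rightarrow> real) \<Rightarrow> 'x \<Rightarrow> 'y set \<Rightarrow> real" where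
  "probY_cond MX MY p x A = set_lebesgue_integral MY A (condY MX MY p x)"

definition densY_restr :: "'x measure \<Rightarrow> 'y measure \<Rightarrow> ('x \<Rightarrow> 'y \<Rightarrow> real) \<Rightarrow> 'y set \<Rightarrow> 'y \<Rightarrow> real" where
  "densY_restr MX MY p A y = (if y \<in> A then margY MX MY p y / probY MX MY p A else 0)"

definition densY_restr_cond :: "'x measure \<Rightarrow> 'y measure \<Rightarrow> ('x \<Rightarrow> 'y \<Rightarrow> real) \<Rightarrow> 'x \<Rightarrow> 'y set \<Rightarrow> 'y \<Rightarrow> real" where
  "densY_restr_cond MX MY p x A y = (if y \<in> A then condY MX MY p x y / probY_cond MX MY p x A else 0)"

definition Ytilde :: "nat \<Rightarrow> (nat \<Rightarrow> 'y set) \<Rightarrow> 'y set" where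
  "Ytilde K Ys = (\<Union>i\<in>{1..K}. Ys i)"

definition PC_Y :: "'x measure \<Rightarrow> 'y measure \<Rightarrow> ('x \<Rightarrow> 'y \<Rightarrow> real) \<Rightarrow> nat \<Rightarrow> (nat \<Rightarrow> 'y set) \<Rightarrow> 'x \<Rightarrow> nat \<Rightarrow> real" where
  "PC_Y MX MY p K Ys x c = probY_cond MX MY p x (Ys c) / probY_cond MX MY p x (Ytilde K Ys)"

definition kl_pt :: "real \<Rightarrow> real \<Rightarrow> real" where
  "kl_pt a b = (if a = 0 then 0 else a * ln (a / b))"

definition KL_fin :: "nat \<Rightarrow> (nat \<Rightarrow> real) \<Rightarrow> (nat \<Rightarrow> real) \<Rightarrow> real" where
  "KL_fin K P Q = (\<Sum>c=1..K. kl_pt (P c) (Q c))"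

definition KL_dens :: "'y measure \<Rightarrow> ('y \<Rightarrow> real) \<Rightarrow> ('y \<Rightarrow> real) \<Rightarrow> real" where
  "KL_dens M f g = (\<integral>y. kl_pt (f y) (g y) \<partial>M)"

definition softmax_nll :: "nat \<Rightarrow> (nat \<Rightarrow> real) \<Rightarrow> nat \<Rightarrow> real" where
  "softmax_nll K v c = - ln (exp (v c) / (\<Sum>i=1..K. exp (v i)))"

definition Lsup_integrand :: "'x measure \<Rightarrow> 'y measure \<Rightarrow> ('x \<Rightarrow> 'y \<Rightarrow> real) \<Rightarrow> ('x \<Rightarrow> nat \<Rightarrow> real) \<Rightarrow> nat \<Rightarrow> ('x \<Rightarrow> nat \<Rightarrow> real) \<Rightarrow> 'x \<Rightarrow> real" where
  "Lsup_integrand MX MY p PC K h x = margX MX MY p x * (\<Sum>c=1..K. PC x c * softmax_nll K (h x) c)"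

definition Lsup :: "'x measure \<Rightarrow> 'y measure \<Rightarrow> ('x \<Rightarrow> 'y \<Rightarrow> real) \<Rightarrow> ('x \<Rightarrow> nat \<Rightarrow> real) \<Rightarrow> nat \<Rightarrow> ('x \<Rightarrow> nat \<Rightarrow> real) \<Rightarrow> real" where
  "Lsup MX MY p PC K h = (\<integral>x. Lsup_integrand MX MY p PC K h x \<partial>MX)"

definition wbar_integrand :: "'x measure \<Rightarrow> 'y measure \<Rightarrow> ('x \<Rightarrow> 'y \<Rightarrow> real) \<Rightarrow> ('y \<Rightarrow> real^'d) \<Rightarrow> real \<Rightarrow> 'y set \<Rightarrow> 'y \<Rightarrow> real^'d" where
  "wbar_integrand MX MY p fY tau A y = densY_restr MX MY p A y *\<^sub>R ((1 / tau) *\<^sub>R fY y)"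

definition wbar :: "'x measure \<Rightarrow> 'y measure \<Rightarrow> ('x \<Rightarrow> 'y \<Rightarrow> real) \<Rightarrow> ('y \<Rightarrow> real^'d) \<Rightarrow> real \<Rightarrow> 'y set \<Rightarrow> real^'d" where
  "wbar MX MY p fY tau A = (\<integral>y. wbar_integrand MX MY p fY tau A y \<partial>MY)"

definition hbar :: "'x measure \<Rightarrow> 'y measure \<Rightarrow> ('x \<Rightarrow> 'y \<Rightarrow> real) \<Rightarrow> ('x \<Rightarrow> real^'d) \<Rightarrow> ('y \<Rightarrow> real^'d) \<Rightarrow> real \<Rightarrow> (nat \<Rightarrow> 'y set) \<Rightarrow> 'x \<Rightarrow> nat \<Rightarrow> real" where
  "hbar MX MY p fX fY tau Ys x i = wbar MX MY p fY tau (Ys i) \<bullet> fX x + ln (probY MX MY p (Ys i))"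

end

theory Submission
  imports Defs
begin


lemma kl_ge: "0 < a \<Longrightarrow> 0 < b \<Longrightarrow> a * ln (a / b) \<ge> a - b" for a b :: real
proof -
  assume a: "0 < a" and b: "0 < b"
  have "ln (b / a) \<le> b / a - 1" using a b by (intro ln_le_minus_one) simp
  hence "a * ln (b / a) \<le> a * (b / a - 1)" using a by (intro mult_left_mono) auto
  also have "\<dots> = b - a" using a by (simp add: field_simps)
  finally have "a * ln (b/a) \<le> b - a" .
  moreover have "ln (a/b) = - ln (b/a)" using a b by (simp add: ln_div)
  ultimately show ?thesis by simp
qed

lemma kl_pt_ge: "0 \<le> a \<Longrightarrow> 0 < b \<Longrightarrow> kl_pt a b \<ge> a - b"
  using kl_ge[of a b] by (auto simp: kl_pt_def)

lemma gibbs: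
  fixes P :: "nat \<Rightarrow> real"
  assumes P0: "\<And>c. c \<in> {1..K} \<Longrightarrow> 0 \<le> P c" and P1: "(\<Sum>c=1..K. P c) = 1"
  shows "(\<Sum>c=1..K. (if P c = 0 then 0 else - P c * ln (P c))) \<le> (\<Sum>c=1..K. P c * softmax_nll K v c)"
proof -
  define Z where "Z = (\<Sum>i=1..K. exp (v i))"
  have ne: "{1..K} \<noteq> {}" using P1 by (metis sum.empty zero_neq_one)
  have Zpos: "0 < Z" unfolding Z_def using ne by (intro sum_pos) auto
  have "(\<Sum>c=1..K. P c * softmax_nll K v c) - (\<Sum>c=1..K. (if P c = 0 then 0 else - P c * ln (P c)))
      = (\<Sum>c=1..K. P c * softmax_nll K v c - (if P c = 0 then 0 else - P c * ln (P c)))"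
    by (simp add: sum_subtractf)
  also have "\<dots> \<ge> (\<Sum>c=1..K. P c - exp (v c) / Z)"
  proof (rule sum_mono)
    fix c assume c: "c \<in> {1..K}"
    have s: "softmax_nll K v c = - ln (exp (v c) / Z)" unfolding softmax_nll_def Z_def ..
    show "P c - exp (v c) / Z \<le> P c * softmax_nll K v c - (if P c = 0 then 0 else - P c * ln (P c))"
    proof (cases "P c = 0")
      case True then show ?thesis using Zpos by simp
    next
      case False
      then have Pp: "0 < P c" using P0[OF c] by simp
      have "P c - exp (v c) / Z \<le> P c * ln (P c / (exp (v c) / Z))"
        using kl_ge[OF Pp, of "exp (v c) / Z"] Zpos by simp
      also have "\<dots> = P c * softmax_nll K v c - (- P c * ln (P c))"
        using Pp Zpos by (simp add: s ln_div ln_mult algebra_simps)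
      finally show ?thesis using False by simp
    qed
  qed
  finally have "(\<Sum>c=1..K. P c - exp (v c) / Z) \<le> (\<Sum>c=1..K. P c * softmax_nll K v c) - (\<Sum>c=1..K. (if P c = 0 then 0 else - P c * ln (P c)))" .
  moreover have "(\<Sum>c=1..K. P c - exp (v c) / Z) = 0"
    using Zpos P1 by (simp add: sum_subtractf sum_divide_distrib[symmetric] Z_def)
  ultimately show ?thesis by simp
qed

lemma alg:
  fixes P a KL h v :: "nat \<Rightarrow> real" and T G :: real
  assumes P0: "\<And>c. c \<in> {1..K} \<Longrightarrow> 0 \<le> P c" and P1: "(\<Sum>c=1..K. P c) = 1"
    and apos: "\<And>c. c \<in> {1..K} \<Longrightarrow> 0 < a c"
    and KL0: "\<And>c. c \<in> {1..K} \<Longrightarrow> 0 \<le> KL c"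
    and hdef: "\<And>c. c \<in> {1..K} \<Longrightarrow> h c = - KL c + ln (a c) + G"
    and T: "(\<Sum>c=1..K. a c) \<le> T"
  shows "(\<Sum>c=1..K. P c * softmax_nll K h c) - (\<Sum>c=1..K. P c * softmax_nll K v c)
      \<le> KL_fin K P (\<lambda>c. a c / T) + (\<Sum>c=1..K. P c * KL c)"
proof -
  have ne: "{1..K} \<noteq> {}" using P1 by (metis sum.empty zero_neq_one)
  have Apos: "0 < (\<Sum>c=1..K. a c)" using ne apos by (intro sum_pos) auto
  hence Tpos: "0 < T" using T by simp
  define Z where "Z = (\<Sum>i=1..K. exp (h i))"
  have Zpos: "0 < Z" unfolding Z_def using ne by (intro sum_pos) auto
  have "Z \<le> (\<Sum>i=1..K. exp G * a i)" unfolding Z_def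
  proof (rule sum_mono)
    fix i assume i: "i \<in> {1..K}"
    have "exp (h i) = exp (- KL i) * a i * exp G" using apos[OF i] by (simp add: hdef[OF i] exp_add exp_diff exp_minus field_simps)
    also have "\<dots> \<le> 1 * a i * exp G" using KL0[OF i] apos[OF i] by (intro mult_right_mono) auto
    finally show "exp (h i) \<le> exp G * a i" by (simp add: mult.commute)
  qed
  also have "\<dots> \<le> exp G * T" using T by (simp add: sum_distrib_left[symmetric])
  finally have "ln Z \<le> ln (exp G * T)" using Zpos by simp
  hence lnZ: "ln Z \<le> G + ln T" using Tpos by (simp add: ln_mult)
  have H: "(\<Sum>c=1..K. P c * softmax_nll K h c) \<le> (\<Sum>c=1..K. P c * (KL c + ln T - ln (a c)))"
  proof (rule sum_mono)
    fix c assume c: "c \<in> {1..K}"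
    have "softmax_nll K h c = ln Z - h c" unfolding softmax_nll_def Z_def[symmetric]
      using Zpos by (simp add: ln_div)
    also have "\<dots> \<le> KL c + ln T - ln (a c)" using lnZ hdef[OF c] by simp
    finally show "P c * softmax_nll K h c \<le> P c * (KL c + ln T - ln (a c))"
      using P0[OF c] by (intro mult_left_mono) auto
  qed
  have KLf: "KL_fin K P (\<lambda>c. a c / T) = (\<Sum>c=1..K. P c * (ln T - ln (a c))) - (\<Sum>c=1..K. (if P c = 0 then 0 else - P c * ln (P c)))"
    unfolding KL_fin_def sum_subtractf[symmetric]
  proof (rule sum.cong[OF refl])
    fix c assume c: "c \<in> {1..K}"
    show "kl_pt (P c) (a c / T) = P c * (ln T - ln (a c)) - (if P c = 0 then 0 else - P c * ln (P c))"
    proof (cases "P c = 0")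
      case False
      then have "0 < P c" using P0[OF c] by simp
      then show ?thesis using apos[OF c] Tpos False
        by (simp add: kl_pt_def ln_div ln_mult algebra_simps)
    qed (simp add: kl_pt_def)
  qed
  have "(\<Sum>c=1..K. P c * (KL c + ln T - ln (a c))) = (\<Sum>c=1..K. P c * KL c) + (\<Sum>c=1..K. P c * (ln T - ln (a c)))"
    by (simp add: sum.distrib[symmetric] algebra_simps)
  with H KLf gibbs[OF P0 P1, of v] show ?thesis by linarith
qed


theorem theorem1:
  fixes MX :: "'x measure" and MY :: "'y measure"
    and p :: "'x \<Rightarrow> 'y \<Rightarrow> real"
    and PC :: "'x \<Rightarrow> nat \<Rightarrow> real" and K :: nat
    and Ys :: "nat \<Rightarrow> 'y set"
    and fX :: "'x \<Rightarrow> real^'d" and fY :: "'y \<Rightarrow> real^'d"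
    and tau \<Gamma> :: real
    and hstar :: "'x \<Rightarrow> nat \<Rightarrow> real"
  assumes sfX: "sigma_finite_measure MX" and sfY: "sigma_finite_measure MY"
    and p_nonneg: "\<And>x y. x \<in> space MX \<Longrightarrow> y \<in> space MY \<Longrightarrow> 0 \<le> p x y"
    and p_meas: "(\<lambda>(x, y). p x y) \<in> borel_measurable (MX \<Otimes>\<^sub>M MY)"
    and p_int: "integrable (MX \<Otimes>\<^sub>M MY) (\<lambda>(x, y). p x y)"
    and p_norm: "(\<integral>z. (\<lambda>(x, y). p x y) z \<partial>(MX \<Otimes>\<^sub>M MY)) = 1"
    and PC_nonneg: "\<And>x c. x \<in> space MX \<Longrightarrow> c \<in> {1..K} \<Longrightarrow> 0 \<le> PC x c"
    and PC_sum: "\<And>x. x \<in> space MX \<Longrightarrow> (\<Sum>c=1..K. PC x c) = 1"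
    and PC_meas: "\<And>c. (\<lambda>x. PC x c) \<in> borel_measurable MX"
    and Ys_sets: "\<And>i. i \<in> {1..K} \<Longrightarrow> Ys i \<in> sets MY"
    and Ys_disj: "disjoint_family_on Ys {1..K}"
    and Ys_pos: "\<And>i. i \<in> {1..K} \<Longrightarrow> 0 < probY MX MY p (Ys i)"
    and tau_pos: "0 < tau"
    and gstar: "\<And>x y. x \<in> space MX \<Longrightarrow> 0 < margX MX MY p x \<Longrightarrow> y \<in> Ytilde K Ys \<Longrightarrow>
                  0 < p x y / (margX MX MY p x * margY MX MY p y) \<and>
                  (1 / tau) * (fX x \<bullet> fY y)
                    = ln (p x y / (margX MX MY p x * margY MX MY p y)) + \<Gamma>"
    and condpos: "\<And>x i. x \<in> space MX \<Longrightarrow> 0 < margX MX MY p x \<Longrightarrow> i \<in> {1..K} \<Longrightarrow>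
                  0 < probY_cond MX MY p x (Ys i)"
    and wbar_int: "\<And>i. i \<in> {1..K} \<Longrightarrow> integrable MY (wbar_integrand MX MY p fY tau (Ys i))"
    and hbar_int: "integrable MX (Lsup_integrand MX MY p PC K (hbar MX MY p fX fY tau Ys))"
    and KL1_int: "integrable MX (\<lambda>x. margX MX MY p x * KL_fin K (PC x) (PC_Y MX MY p K Ys x))"
    and KL2_inner_int: "\<And>x c. x \<in> space MX \<Longrightarrow> 0 < margX MX MY p x \<Longrightarrow> c \<in> {1..K} \<Longrightarrow>
                  integrable MY (\<lambda>y. kl_pt (densY_restr MX MY p (Ys c) y)
                                             (densY_restr_cond MX MY p x (Ys c) y))"
    and KL2_int: "integrable MX (\<lambda>x. margX MX MY p x *
                  (\<Sum>c=1..K. PC x c * KL_dens MY (densY_restr MX MY p (Ys c))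
                                                  (densY_restr_cond MX MY p x (Ys c))))"
    and hstar_meas: "\<And>i. (\<lambda>x. hstar x i) \<in> borel_measurable MX"
    and hstar_int: "integrable MX (Lsup_integrand MX MY p PC K hstar)"
    and hstar_min: "\<And>h. (\<And>i. (\<lambda>x. h x i) \<in> borel_measurable MX) \<Longrightarrow>
                  integrable MX (Lsup_integrand MX MY p PC K h) \<Longrightarrow>
                  Lsup MX MY p PC K hstar \<le> Lsup MX MY p PC K h"
  shows "Lsup MX MY p PC K (hbar MX MY p fX fY tau Ys) - Lsup MX MY p PC K hstar
     \<le> (\<integral>x. margX MX MY p x * KL_fin K (PC x) (PC_Y MX MY p K Ys x) \<partial>MX)
       + (\<integral>x. margX MX MY p x *
            (\<Sum>c=1..K. PC x c * KL_dens MY (densY_restr MX MY p (Ys c))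
                                            (densY_restr_cond MX MY p x (Ys c))) \<partial>MX)"
proof -
  let ?m = "margX MX MY p"
  have mY_nn: "0 \<le> margY MX MY p y" if "y \<in> space MY" for y
    unfolding margY_def using p_nonneg that by (auto intro!: integral_nonneg)
  have mX_nn: "0 \<le> ?m x" if "x \<in> space MX" for x
    unfolding margX_def using p_nonneg that by (auto intro!: integral_nonneg)
  have percx: "hbar MX MY p fX fY tau Ys x c
        = - KL_dens MY (densY_restr MX MY p (Ys c)) (densY_restr_cond MX MY p x (Ys c))
          + ln (probY_cond MX MY p x (Ys c)) + \<Gamma>
      \<and> 0 \<le> KL_dens MY (densY_restr MX MY p (Ys c)) (densY_restr_cond MX MY p x (Ys c))
      \<and> set_integrable MY (Ys c) (condY MX MY p x)"
    if x: "x \<in> space MX" and m: "0 < ?m x" and c: "c \<in> {1..K}" for x c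
  proof -
    let ?P = "probY MX MY p (Ys c)" and ?a = "probY_cond MX MY p x (Ys c)"
    let ?q = "densY_restr MX MY p (Ys c)" and ?r = "densY_restr_cond MX MY p x (Ys c)"
    let ?kl = "\<lambda>y. kl_pt (?q y) (?r y)"
    let ?C = "ln ?a - ln ?P + \<Gamma>"
    have Ysub: "Ys c \<subseteq> space MY" using Ys_sets[OF c] sets.sets_into_space by blast
    have Ppos: "0 < ?P" using Ys_pos[OF c] .
    have apos: "0 < ?a" using condpos[OF x m c] .
    have iq0: "set_integrable MY (Ys c) (margY MX MY p)"
      using Ppos unfolding probY_def set_lebesgue_integral_def set_integrable_def
      by (metis less_irrefl not_integrable_integral_eq)
    have ir0: "set_integrable MY (Ys c) (condY MX MY p x)"
      using apos unfolding probY_cond_def set_lebesgue_integral_def set_integrable_def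
      by (metis less_irrefl not_integrable_integral_eq)
    have qeq: "?q = (\<lambda>y. (indicator (Ys c) y *\<^sub>R margY MX MY p y) / ?P)"
      by (auto simp: densY_restr_def indicator_def fun_eq_iff)
    have req: "?r = (\<lambda>y. (indicator (Ys c) y *\<^sub>R condY MX MY p x y) / ?a)"
      by (auto simp: densY_restr_cond_def indicator_def fun_eq_iff)
    have iq: "integrable MY ?q" unfolding qeq using iq0 unfolding set_integrable_def
      by (intro integrable_divide)
    have ir: "integrable MY ?r" unfolding req using ir0 unfolding set_integrable_def
      by (intro integrable_divide)
    have q1: "integral\<^sup>L MY ?q = 1" unfolding qeq
      using Ppos by (simp add: probY_def set_lebesgue_integral_def del: scaleR_conv_of_real)
    have r1: "integral\<^sup>L MY ?r = 1" unfolding req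
      using apos by (simp add: probY_cond_def set_lebesgue_integral_def del: scaleR_conv_of_real)
    have ikl: "integrable MY ?kl" using KL2_inner_int[OF x m c] .
    have pos: "0 < margY MX MY p y \<and> 0 < p x y" if y: "y \<in> Ys c" for y
    proof -
      have yT: "y \<in> Ytilde K Ys" using y c unfolding Ytilde_def by blast
      have g: "0 < p x y / (?m x * margY MX MY p y)" using gstar[OF x m yT] by blast
      have "0 \<le> margY MX MY p y" using mY_nn y Ysub by blast
      moreover have "0 \<le> p x y" using p_nonneg x y Ysub by blast
      ultimately show ?thesis using g m
        by (metis divide_eq_0_iff le_less mult_eq_0_iff less_irrefl)
    qed
    have F5: "wbar_integrand MX MY p fY tau (Ys c) y \<bullet> fX x = - ?kl y + ?q y * ?C"
      if y: "y \<in> space MY" for y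
    proof (cases "y \<in> Ys c")
      case False then show ?thesis
        by (simp add: wbar_integrand_def densY_restr_def densY_restr_cond_def kl_pt_def)
    next
      case True
      have yT: "y \<in> Ytilde K Ys" using True c unfolding Ytilde_def by blast
      have g: "(1 / tau) * (fX x \<bullet> fY y)
                    = ln (p x y / (?m x * margY MX MY p y)) + \<Gamma>" using gstar[OF x m yT] by blast
      from pos[OF True] have my: "0 < margY MX MY p y" and pxy: "0 < p x y" by auto
      have qy: "?q y = margY MX MY p y / ?P" using True by (simp add: densY_restr_def)
      have ry: "?r y = (p x y / ?m x) / ?a" using True by (simp add: densY_restr_cond_def condY_def)
      have qpos: "0 < ?q y" using qy my Ppos by simp
      have "wbar_integrand MX MY p fY tau (Ys c) y \<bullet> fX x = ?q y * ((1 / tau) * (fX x \<bullet> fY y))"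
        by (simp add: wbar_integrand_def inner_commute)
      also have "\<dots> = ?q y * (ln (p x y / (?m x * margY MX MY p y)) + \<Gamma>)" using g by simp
      also have "\<dots> = - ?kl y + ?q y * ?C"
        using qpos my pxy m Ppos apos
        by (simp add: kl_pt_def qy ry ln_div ln_mult field_simps)
      finally show ?thesis .
    qed
    have "wbar MX MY p fY tau (Ys c) \<bullet> fX x
        = integral\<^sup>L MY (\<lambda>y. wbar_integrand MX MY p fY tau (Ys c) y \<bullet> fX x)"
      unfolding wbar_def
      by (rule integral_bounded_linear[OF bounded_linear_inner_left wbar_int[OF c], symmetric])
    also have "\<dots> = integral\<^sup>L MY (\<lambda>y. - ?kl y + ?q y * ?C)"
      by (rule Bochner_Integration.integral_cong[OF refl F5])
    also have "\<dots> = - integral\<^sup>L MY ?kl + ?C"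
      using ikl iq q1 by simp
    finally have w: "wbar MX MY p fY tau (Ys c) \<bullet> fX x = - KL_dens MY ?q ?r + ?C"
      unfolding KL_dens_def .
    have h: "hbar MX MY p fX fY tau Ys x c = - KL_dens MY ?q ?r + ln ?a + \<Gamma>"
      unfolding hbar_def w by simp
    have "integral\<^sup>L MY (\<lambda>y. ?q y - ?r y) \<le> integral\<^sup>L MY ?kl"
    proof (rule integral_mono[OF _ ikl])
      show "integrable MY (\<lambda>y. ?q y - ?r y)" using iq ir by simp
      fix y assume "y \<in> space MY"
      show "?q y - ?r y \<le> ?kl y"
      proof (cases "y \<in> Ys c")
        case False then show ?thesis
          by (simp add: densY_restr_def densY_restr_cond_def kl_pt_def)
      next
        case True
        from pos[OF True] have my: "0 < margY MX MY p y" and pxy: "0 < p x y" by auto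
        have "0 \<le> ?q y" using True my Ppos by (simp add: densY_restr_def)
        moreover have "0 < ?r y" using True pxy m apos
          by (simp add: densY_restr_cond_def condY_def)
        ultimately show ?thesis by (rule kl_pt_ge)
      qed
    qed
    moreover have "integral\<^sup>L MY (\<lambda>y. ?q y - ?r y) = 0" using iq ir q1 r1 by simp
    ultimately have "0 \<le> KL_dens MY ?q ?r" unfolding KL_dens_def by simp
    with h ir0 show ?thesis by blast
  qed
  have key: "Lsup_integrand MX MY p PC K (hbar MX MY p fX fY tau Ys) x
           - Lsup_integrand MX MY p PC K hstar x
      \<le> ?m x * KL_fin K (PC x) (PC_Y MX MY p K Ys x) + ?m x *
            (\<Sum>c=1..K. PC x c * KL_dens MY (densY_restr MX MY p (Ys c))
                                            (densY_restr_cond MX MY p x (Ys c)))"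
    if x: "x \<in> space MX" for x
  proof (cases "?m x = 0")
    case True then show ?thesis by (simp add: Lsup_integrand_def)
  next
    case False
    with mX_nn[OF x] have m: "0 < ?m x" by simp
    let ?T = "probY_cond MX MY p x (Ytilde K Ys)"
    have T: "(\<Sum>c=1..K. probY_cond MX MY p x (Ys c)) \<le> ?T"
    proof -
      have "?T = (\<Sum>c\<in>{1..K}. set_lebesgue_integral MY (Ys c) (condY MX MY p x))"
        unfolding probY_cond_def Ytilde_def
        by (rule set_integral_finite_Union) (use percx[OF x m] Ys_disj Ys_sets in auto)
      then show ?thesis by (simp add: probY_cond_def)
    qed
    have PCY: "PC_Y MX MY p K Ys x = (\<lambda>c. probY_cond MX MY p x (Ys c) / ?T)"
      by (simp add: PC_Y_def fun_eq_iff)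
    have A: "(\<Sum>c=1..K. PC x c * softmax_nll K (hbar MX MY p fX fY tau Ys x) c)
          - (\<Sum>c=1..K. PC x c * softmax_nll K (hstar x) c)
      \<le> KL_fin K (PC x) (PC_Y MX MY p K Ys x) +
            (\<Sum>c=1..K. PC x c * KL_dens MY (densY_restr MX MY p (Ys c))
                                            (densY_restr_cond MX MY p x (Ys c)))"
      unfolding PCY
      by (rule alg[where G=\<Gamma>]) (use PC_nonneg[OF x] PC_sum[OF x] condpos[OF x m] percx[OF x m] T in auto)
    from mult_left_mono[OF A mX_nn[OF x]] show ?thesis
      by (simp add: Lsup_integrand_def algebra_simps)
  qed
  have "Lsup MX MY p PC K (hbar MX MY p fX fY tau Ys) - Lsup MX MY p PC K hstar
     = (\<integral>x. Lsup_integrand MX MY p PC K (hbar MX MY p fX fY tau Ys) x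
           - Lsup_integrand MX MY p PC K hstar x \<partial>MX)"
    unfolding Lsup_def using hbar_int hstar_int by simp
  also have "\<dots> \<le> (\<integral>x. ?m x * KL_fin K (PC x) (PC_Y MX MY p K Ys x) + ?m x *
            (\<Sum>c=1..K. PC x c * KL_dens MY (densY_restr MX MY p (Ys c))
                                            (densY_restr_cond MX MY p x (Ys c))) \<partial>MX)"
    by (rule integral_mono) (use hbar_int hstar_int KL1_int KL2_int key in auto)
  also have "\<dots> = (\<integral>x. ?m x * KL_fin K (PC x) (PC_Y MX MY p K Ys x) \<partial>MX)
       + (\<integral>x. ?m x *
            (\<Sum>c=1..K. PC x c * KL_dens MY (densY_restr MX MY p (Ys c))
                                            (densY_restr_cond MX MY p x (Ys c))) \<partial>MX)"
    using KL1_int KL2_int by (rule Bochner_Integration.integral_add)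
  finally show ?thesis .
qed

end
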